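(* Let $X=\{x_1,\dots,x_M\}\subset\mathbb{R}^n$ be finite and $\phi_1,\dots,\phi_N$ real functions on $X$ such that the matrix $V$, $V_{i,j}=\phi_j(x_i)$, has rank $N$. Then: (i) $w^*\in\mathbb{R}^M_{\geq0}$ solves Problem 1 if and only if it solves Problem 2; (ii) $z^*\in\mathbb{R}^M$ solves Problem 3 if and only if $w^*:=(z_1^{*2},\dots,z_M^{*2})$ solves Problem 1. In either case, $w^*$ is a D-optimal design for $\Phi=\{\phi_1,\dots,\phi_N\}$ on $X$ (supported on $\{x_i: w^*_i>0\}$).
   Context: Let $G(w)=V^t\operatorname{diag}(w)V$ for $w\in\mathbb{R}^M$. Problem 1: find $w^*\in\mathbb{R}^M_{\geq0}$ maximizing $\det G(w)$ over $\{w\in\mathbb{R}^M_{\geq0}:\|w\|_1=1\}$; a solution is called a D-optimal design. Problem 2: find $w^*\in\mathbb{R}^M_{\geq0}$ minimizing $E(w)=-\frac1N\log\det G(w)+\|w\|_1$ over $\mathbb{R}^M_{\geq0}$ (with $E=+\infty$ where $\det G(w)=0$). Problem 3: find $z^*\in\mathbb{R}^M$ minimizing $F(z)=E((z_1^2,\dots,z_M^2))=-\frac1N\log\det G((z_1^2,\dots,z_M^2))+\|z\|_2^2$ over $\mathbb{R}^M$ (with $F=+\infty$ where the determinant vanishes). *)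

theory Defs
  imports "HOL-Analysis.Analysis"
begin

text \<open>Index type 'm enumerates the points x_1..x_M (M = CARD('m)), index type 'n the
functions phi_1..phi_N (N = CARD('n)). A vector w in R^M is a real^'m.\<close>

definition diagm :: "real^'m \<Rightarrow> real^'m^'m" where
  "diagm w = (\<chi> i j. if i = j then w $ i else 0)"

definition Gmat :: "real^'n^'m \<Rightarrow> real^'m \<Rightarrow> real^'n^'n" where
  "Gmat V w = transpose V ** diagm w ** V"

definition nonneg_vec :: "real^'m \<Rightarrow> bool" where
  "nonneg_vec w \<longleftrightarrow> (\<forall>i. 0 \<le> w $ i)"

definition norm1 :: "real^'m \<Rightarrow> real" where
  "norm1 w = (\<Sum>i\<in>UNIV. \<bar>w $ i\<bar>)"

definition solves_P1 :: "real^'n^'m \<Rightarrow> real^'m \<Rightarrow> bool" where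
  "solves_P1 V w \<longleftrightarrow> nonneg_vec w \<and> norm1 w = 1 \<and>
     (\<forall>v. nonneg_vec v \<and> norm1 v = 1 \<longrightarrow> det (Gmat V v) \<le> det (Gmat V w))"

definition Efun :: "real^'n^'m \<Rightarrow> real^'m \<Rightarrow> ereal" where
  "Efun V w = (if det (Gmat V w) = 0 then \<infinity>
     else ereal (- (1 / real CARD('n)) * ln (det (Gmat V w)) + norm1 w))"

definition solves_P2 :: "real^'n^'m \<Rightarrow> real^'m \<Rightarrow> bool" where
  "solves_P2 V w \<longleftrightarrow> nonneg_vec w \<and> (\<forall>v. nonneg_vec v \<longrightarrow> Efun V w \<le> Efun V v)"

definition sqvec :: "real^'m \<Rightarrow> real^'m" where
  "sqvec z = (\<chi> i. (z $ i)^2)"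

definition Ffun :: "real^'n^'m \<Rightarrow> real^'m \<Rightarrow> ereal" where
  "Ffun V z = Efun V (sqvec z)"

definition solves_P3 :: "real^'n^'m \<Rightarrow> real^'m \<Rightarrow> bool" where
  "solves_P3 V z \<longleftrightarrow> (\<forall>y. Ffun V z \<le> Ffun V y)"

end

theory Submission
  imports Defs
begin
lemma Gmat_entry: "Gmat V w $ i $ j = (\<Sum>k\<in>UNIV. V$k$i * w$k * V$k$j)"
  unfolding Gmat_def diagm_def matrix_matrix_mult_def transpose_def
  by (simp add: sum_distrib_right if_distrib mult.assoc cong: if_cong)

lemma quad: "x \<bullet> (Gmat V w *v x) = (\<Sum>k\<in>UNIV. w$k * ((V *v x)$k)^2)"
proof -
  have "x \<bullet> (Gmat V w *v x) = (\<Sum>i\<in>UNIV. \<Sum>j\<in>UNIV. \<Sum>k\<in>UNIV. x$i * (V$k$i * w$k * V$k$j) * x$j)"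
    unfolding inner_vec_def matrix_vector_mult_def Gmat_entry
    by (simp add: sum_distrib_left sum_distrib_right mult.assoc)
  also have "\<dots> = (\<Sum>i\<in>UNIV. \<Sum>k\<in>UNIV. \<Sum>j\<in>UNIV. x$i * (V$k$i * w$k * V$k$j) * x$j)"
    by (rule sum.cong[OF refl], rule sum.swap)
  also have "\<dots> = (\<Sum>k\<in>UNIV. \<Sum>i\<in>UNIV. \<Sum>j\<in>UNIV. x$i * (V$k$i * w$k * V$k$j) * x$j)"
    by (rule sum.swap)
  also have "\<dots> = (\<Sum>k\<in>UNIV. w$k * ((\<Sum>i\<in>UNIV. V$k$i * x$i) * (\<Sum>j\<in>UNIV. V$k$j * x$j)))"
    by (simp add: sum_product sum_distrib_left mult_ac)
  finally show ?thesis by (simp add: matrix_vector_mult_def power2_eq_square)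
qed

lemma det_nz: "det (A::real^'n::finite^'n) \<noteq> 0 \<longleftrightarrow> inj ((*v) A)"
  using det_nz_iff_inj[of "(*v) A"] by simp

lemma inj_ker: "inj ((*v) (A::real^'n::finite^'m::finite)) \<longleftrightarrow> (\<forall>x. A *v x = 0 \<longrightarrow> x = 0)"
proof
  assume "inj ((*v) A)"
  then show "\<forall>x. A *v x = 0 \<longrightarrow> x = 0"
    by (metis injD matrix_vector_mult_0_right)
next
  assume h: "\<forall>x. A *v x = 0 \<longrightarrow> x = 0"
  show "inj ((*v) A)"
  proof (rule injI)
    fix x y assume "A *v x = A *v y"
    then have "A *v (x - y) = 0" by (simp add: matrix_vector_mult_diff_distrib)
    then show "x = y" using h by (metis eq_iff_diff_eq_0)
  qed
qed

lemma det_scale: "det (c *\<^sub>R (A::real^'n::finite^'n)) = c ^ CARD('n) * det A"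
  unfolding det_def by (simp add: prod.distrib sum_distrib_left mult.left_commute)

lemma Gscale: "Gmat V (c *\<^sub>R w) = c *\<^sub>R Gmat V w"
  by (simp add: vec_eq_iff Gmat_entry sum_distrib_left mult_ac)

lemma psd_det:
  fixes A :: "real^'n::finite^'n"
  assumes psd: "\<And>x. 0 \<le> x \<bullet> (A *v x)"
  shows "0 \<le> det A"
proof (rule ccontr)
  assume neg: "\<not> 0 \<le> det A"
  define f where "f t = det (\<chi> i j. (1-t) * (if i=j then 1 else 0) + t * A$i$j)" for t :: real
  have cont: "continuous_on {0..1} f"
    unfolding f_def det_def by (intro continuous_intros)
  have f1: "f 1 = det A" unfolding f_def by simp
  have f0: "f 0 = 1" unfolding f_def by (simp add: mat_def[symmetric])
  obtain t where t: "t \<in> {0..1}" "f t = 0"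
    using IVT2'[of f 1 0 0] cont f0 f1 neg by auto
  have "t \<noteq> 1" using t f1 neg by auto
  with t have tl: "t < 1" "0 \<le> t" by auto
  define M where "M = (\<chi> i j. (1-t) * (if i=j then 1 else 0) + t * A$i$j)"
  have Mx: "x \<bullet> (M *v x) = (1-t) * (x \<bullet> x) + t * (x \<bullet> (A *v x))" for x
  proof -
    have "M = (1-t) *\<^sub>R mat 1 + t *\<^sub>R A" by (simp add: M_def vec_eq_iff mat_def)
    then have "M *v x = (1-t) *\<^sub>R x + t *\<^sub>R (A *v x)"
      by (simp add: matrix_vector_mult_add_rdistrib scaleR_matrix_vector_assoc[symmetric])
    then show ?thesis by (simp add: inner_add_right)
  qed
  have "inj ((*v) M)" unfolding inj_ker
  proof (intro allI impI)
    fix x assume "M *v x = 0"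
    then have "(1-t) * (x \<bullet> x) + t * (x \<bullet> (A *v x)) = 0" using Mx[of x] by simp
    moreover have "0 \<le> t * (x \<bullet> (A *v x))" using psd tl by simp
    moreover have "0 \<le> x \<bullet> x" by simp
    ultimately have "(1-t) * (x \<bullet> x) = 0" using tl
      by (smt (verit) mult_nonneg_nonneg)
    then show "x = 0" using tl by simp
  qed
  then have "det M \<noteq> 0" using det_nz by blast
  then show False using t unfolding f_def M_def by simp
qed

lemma norm1_scale: "0 \<le> c \<Longrightarrow> norm1 (c *\<^sub>R w) = c * norm1 w"
  unfolding norm1_def by (simp add: abs_mult sum_distrib_left)

lemma nonneg_scale: "0 \<le> c \<Longrightarrow> nonneg_vec w \<Longrightarrow> nonneg_vec (c *\<^sub>R w)"
  unfolding nonneg_vec_def by simp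

lemma det_G_nonneg: "nonneg_vec w \<Longrightarrow> 0 \<le> det (Gmat V w)"
  by (rule psd_det) (auto simp: quad nonneg_vec_def intro!: sum_nonneg)

lemma det_G_zero: "det (Gmat V (0::real^'m::finite) :: real^'n::finite^'n) = 0"
proof -
  have "Gmat V (0::real^'m) = (0::real) *\<^sub>R (Gmat V (0::real^'m) :: real^'n^'n)"
    using Gscale[of V 0 "0::real^'m"] by simp
  then have "det (Gmat V (0::real^'m) :: real^'n^'n) = 0 ^ CARD('n) * det (Gmat V (0::real^'m) :: real^'n^'n)"
    using det_scale[of 0 "Gmat V (0::real^'m) :: real^'n^'n"] by metis
  moreover have "CARD('n) \<noteq> 0" by simp
  ultimately show ?thesis by (simp add: power_0_left)
qed

lemma decomp:
  fixes V :: "real^'n::finite^'m::finite"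
  assumes "nonneg_vec v" "0 < det (Gmat V v)"
  obtains s u where "0 < s" "v = s *\<^sub>R u" "nonneg_vec u" "norm1 u = 1" "0 < det (Gmat V u)"
proof -
  define s where "s = norm1 v"
  have "s \<noteq> 0"
  proof
    assume "s = 0"
    then have "\<forall>i\<in>UNIV. \<bar>v$i\<bar> = 0" unfolding s_def norm1_def
      by (subst sum_nonneg_eq_0_iff[symmetric]) auto
    then have "v = 0" by (simp add: vec_eq_iff)
    then show False using assms det_G_zero by (metis less_irrefl)
  qed
  moreover have "0 \<le> s" unfolding s_def norm1_def by (simp add: sum_nonneg)
  ultimately have s: "0 < s" by simp
  define u where "u = (1/s) *\<^sub>R v"
  have vu: "v = s *\<^sub>R u" using s by (simp add: u_def)
  have "norm1 u = 1" using s by (simp add: u_def norm1_scale s_def)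
  moreover have "nonneg_vec u" using s assms by (simp add: u_def nonneg_scale)
  moreover have "0 < det (Gmat V u)" using s assms by (simp add: u_def Gscale det_scale)
  ultimately show ?thesis using that s vu by blast
qed

lemma Ecalc:
  fixes V :: "real^'n::finite^'m::finite"
  assumes "0 < s" "0 < det (Gmat V u)" "norm1 u = 1"
  shows "Efun V (s *\<^sub>R u) = ereal (- (1 / real CARD('n)) * ln (det (Gmat V u)) + (s - ln s))"
proof -
  have N: "0 < real CARD('n)" by simp
  have d: "det (Gmat V (s *\<^sub>R u)) = s ^ CARD('n) * det (Gmat V u)" by (simp add: Gscale det_scale)
  have "ln (det (Gmat V (s *\<^sub>R u))) = real CARD('n) * ln s + ln (det (Gmat V u))"
    unfolding d using assms by (simp add: ln_mult ln_realpow)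
  moreover have "det (Gmat V (s *\<^sub>R u)) \<noteq> 0" unfolding d using assms by simp
  ultimately show ?thesis unfolding Efun_def using assms N
    by (simp add: norm1_scale field_simps)
qed

theorem mainTheorem2:
  fixes x :: "'m::finite \<Rightarrow> real^'d"
    and \<phi> :: "'n::finite \<Rightarrow> real^'d \<Rightarrow> real"
    and V :: "real^'n^'m"
  assumes "inj x"
    and "V = (\<chi> i j. \<phi> j (x i))"
    and "rank V = CARD('n)"
  shows "(\<forall>w. solves_P1 V w \<longleftrightarrow> solves_P2 V w)
       \<and> (\<forall>z. solves_P3 V z \<longleftrightarrow> solves_P1 V (sqvec z))"
proof -
  have N: "0 < real CARD('n)" by simp
  define one :: "real^'m" where "one = (\<chi> i. 1)"
  have injV: "V *v y = 0 \<Longrightarrow> y = 0" for y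
    using assms(3) full_rank_injective inj_ker by blast
  have d1: "0 < det (Gmat V one)"
  proof -
    have "0 \<le> det (Gmat V one)" by (rule det_G_nonneg) (simp add: one_def nonneg_vec_def)
    moreover have "inj ((*v) (Gmat V one))" unfolding inj_ker
    proof (intro allI impI)
      fix y assume "Gmat V one *v y = 0"
      then have "(\<Sum>k\<in>UNIV. ((V *v y)$k)^2) = 0" using quad[of y V one] by (simp add: one_def)
      then have "\<forall>k\<in>UNIV. ((V *v y)$k)^2 = 0" by (subst sum_nonneg_eq_0_iff[symmetric]) auto
      then have "V *v y = 0" by (simp add: vec_eq_iff)
      then show "y = 0" by (rule injV)
    qed
    ultimately show ?thesis using det_nz by (metis less_eq_real_def)
  qed
  define u0 where "u0 = (1 / real CARD('m)) *\<^sub>R one"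
  have u0: "nonneg_vec u0" "norm1 u0 = 1" "0 < det (Gmat V u0)"
    using d1 by (auto simp: u0_def one_def nonneg_vec_def norm1_def Gscale det_scale)
  have Efin: "Efun V u0 < \<infinity>" using u0 by (simp add: Efun_def)
  have Eu: "Efun V u = ereal (- (1 / real CARD('n)) * ln (det (Gmat V u)) + 1)"
    if "0 < det (Gmat V u)" "norm1 u = 1" for u
    using Ecalc[of 1 V u] that by simp
  have part1: "solves_P1 V w \<longleftrightarrow> solves_P2 V w" for w
  proof
    assume P1: "solves_P1 V w"
    then have w: "nonneg_vec w" "norm1 w = 1" and wmax: "\<And>v. nonneg_vec v \<Longrightarrow> norm1 v = 1 \<Longrightarrow> det (Gmat V v) \<le> det (Gmat V w)"
      unfolding solves_P1_def by auto
    have dw: "0 < det (Gmat V w)" using wmax[OF u0(1,2)] u0(3) by simp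
    show "solves_P2 V w" unfolding solves_P2_def
    proof (intro conjI allI impI)
      show "nonneg_vec w" by fact
      fix v :: "real^'m" assume v: "nonneg_vec v"
      show "Efun V w \<le> Efun V v"
      proof (cases "det (Gmat V v) = 0")
        case True then show ?thesis by (simp add: Efun_def)
      next
        case False
        then have "0 < det (Gmat V v)" using det_G_nonneg[OF v, of V] by simp
        then obtain s u where su: "0 < s" "v = s *\<^sub>R u" "nonneg_vec u" "norm1 u = 1" "0 < det (Gmat V u)"
          using decomp v by blast
        have "det (Gmat V u) \<le> det (Gmat V w)" using wmax su by simp
        then have "ln (det (Gmat V u)) \<le> ln (det (Gmat V w))" using su dw by simp
        moreover have "ln s \<le> s - 1" using su ln_le_minus_one by simp
        ultimately have "- (1 / real CARD('n)) * ln (det (Gmat V w)) + 1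
            \<le> - (1 / real CARD('n)) * ln (det (Gmat V u)) + (s - ln s)"
        proof -
          have "- (1 / real CARD('n)) * ln (det (Gmat V w)) \<le> - (1 / real CARD('n)) * ln (det (Gmat V u))"
            using N \<open>ln (det (Gmat V u)) \<le> ln (det (Gmat V w))\<close>
            by (simp add: divide_right_mono)
          then show ?thesis using \<open>ln s \<le> s - 1\<close> by linarith
        qed
        then show ?thesis using Eu[OF dw w(2)] Ecalc[OF su(1) su(5) su(4)] su(2) by simp
      qed
    qed
  next
    assume P2: "solves_P2 V w"
    then have w: "nonneg_vec w" and wmin: "\<And>v. nonneg_vec v \<Longrightarrow> Efun V w \<le> Efun V v"
      unfolding solves_P2_def by auto
    have "Efun V w < \<infinity>" using wmin[OF u0(1)] Efin by (rule le_less_trans)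
    then have "det (Gmat V w) \<noteq> 0" by (auto simp: Efun_def)
    then have dw: "0 < det (Gmat V w)" using det_G_nonneg[OF w, of V] by simp
    then obtain s u where su: "0 < s" "w = s *\<^sub>R u" "nonneg_vec u" "norm1 u = 1" "0 < det (Gmat V u)"
      using decomp w by blast
    have "Efun V w \<le> Efun V u" using wmin su by simp
    then have "s - ln s \<le> 1" using Eu[OF su(5) su(4)] Ecalc[OF su(1) su(5) su(4)] su(2) by simp
    then have "ln s = s - 1" using ln_le_minus_one[OF su(1)] by simp
    then have "s = 1" using ln_eq_minus_one su(1) by blast
    then have wu: "w = u" using su by simp
    show "solves_P1 V w" unfolding solves_P1_def
    proof (intro conjI allI impI)
      show "nonneg_vec w" "norm1 w = 1" using w su wu by auto
      fix v :: "real^'m" assume v: "nonneg_vec v \<and> norm1 v = 1"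
      show "det (Gmat V v) \<le> det (Gmat V w)"
      proof (cases "det (Gmat V v) \<le> 0")
        case True then show ?thesis using dw by simp
      next
        case False
        then have dv: "0 < det (Gmat V v)" by simp
        have "Efun V w \<le> Efun V v" using wmin v by simp
        then have "- (1 / real CARD('n)) * ln (det (Gmat V w)) \<le> - (1 / real CARD('n)) * ln (det (Gmat V v))"
          using Eu[OF dv] Eu[OF dw] v su wu by simp
        then have "ln (det (Gmat V v)) \<le> ln (det (Gmat V w))" using N
          by (simp add: divide_le_cancel)
        then show ?thesis using dv dw by simp
      qed
    qed
  qed
  have part2: "solves_P3 V z \<longleftrightarrow> solves_P2 V (sqvec z)" for z
  proof
    assume "solves_P3 V z"
    then have zmin: "\<And>y. Efun V (sqvec z) \<le> Efun V (sqvec y)" unfolding solves_P3_def Ffun_def by auto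
    show "solves_P2 V (sqvec z)" unfolding solves_P2_def
    proof (intro conjI allI impI)
      show "nonneg_vec (sqvec z)" by (simp add: nonneg_vec_def sqvec_def)
      fix v :: "real^'m" assume v: "nonneg_vec v"
      have "sqvec (\<chi> i. sqrt (v$i)) = v" using v by (simp add: sqvec_def vec_eq_iff nonneg_vec_def)
      then show "Efun V (sqvec z) \<le> Efun V v" using zmin by metis
    qed
  next
    assume "solves_P2 V (sqvec z)"
    then show "solves_P3 V z" unfolding solves_P2_def solves_P3_def Ffun_def
      by (simp add: nonneg_vec_def sqvec_def)
  qed
  show ?thesis using part1 part2 by blast
qed
end
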